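(* Let $k\ge1$ be an integer and $\rho\in(0,1)$, and let $\tilde\varepsilon=\rho\,\frac{1+\cos(\frac{2k-1}{2k}\pi)}{1-\cos(\frac{2k-1}{2k}\pi)}$. For $\varepsilon\in[0,\tilde\varepsilon]$ let $p_\varepsilon(X)=T_k\big(\frac{2X}{\rho+\varepsilon}-\frac{\rho-\varepsilon}{\rho+\varepsilon}\big)$ and write $p_\varepsilon(X)=\sum_{i=0}^kc_iX^i$. Then: (i) $\operatorname{sign}(c_i)=(-1)^{k-i}$ for $i=1,\dots,k$, and $(-1)^kc_0\ge0$; (ii) on $[-\varepsilon,\rho]$, $|p_\varepsilon|$ attains its maximum at the points $m_i=\frac{(\rho+\varepsilon)\cos(\frac{i\pi}{k})+\rho-\varepsilon}{2}\in[-\varepsilon,\rho]$, $i=0,\dots,k$, and $p_\varepsilon(m_i)=(-1)^i$.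
   Context: $T_k$ is the Chebyshev polynomial of the first kind of degree $k$, i.e. $T_k(\cos\theta)=\cos(k\theta)$. *)

theory Defs
  imports "HOL-Computational_Algebra.Polynomial" "HOL-Analysis.Analysis"
begin

fun cheb_T :: "nat \<Rightarrow> real poly" where
  "cheb_T 0 = 1"
| "cheb_T (Suc 0) = [:0, 1:]"
| "cheb_T (Suc (Suc n)) = [:0, 2:] * cheb_T (Suc n) - cheb_T n"

definition p_eps :: "nat \<Rightarrow> real \<Rightarrow> real \<Rightarrow> real poly" where
  "p_eps k \<rho> \<epsilon> = pcompose (cheb_T k) [: -((\<rho> - \<epsilon>) / (\<rho> + \<epsilon>)), 2 / (\<rho> + \<epsilon>) :]"

end

theory Submission
  imports Defs
begin


lemma cheb_cos: "poly (cheb_T n) (cos t) = cos (real n * t)"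
proof (induction n rule: cheb_T.induct)
  case 1 then show ?case by simp
next
  case 2 then show ?case by simp
next
  case (3 n)
  have "cos (real (Suc (Suc n)) * t) = 2 * cos t * cos (real (Suc n) * t) - cos (real n * t)"
    using cos_times_cos[of t "real (Suc n) * t"] by (simp add: algebra_simps)
  then show ?case using 3 by simp
qed

lemma cheb_deg_coeff: "degree (cheb_T n) \<le> n \<and> coeff (cheb_T n) n = (if n = 0 then 1 else 2 ^ (n - 1))"
proof (induction n rule: cheb_T.induct)
  case 1 then show ?case by simp
next
  case 2 then show ?case by simp
next
  case (3 n)
  have d1: "degree ([:0, 2:] * cheb_T (Suc n)) \<le> Suc (Suc n)"
    using degree_mult_le[of "[:0, 2:]" "cheb_T (Suc n)"] 3 by simp
  have d: "degree (cheb_T (Suc (Suc n))) \<le> Suc (Suc n)"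
    using degree_diff_le[OF d1, of "cheb_T n"] 3 by simp
  have c0: "coeff (cheb_T n) (Suc (Suc n)) = 0" using 3 by (intro coeff_eq_0) auto
  have "coeff ([:0, 2:] * cheb_T (Suc n)) (Suc (Suc n)) = 2 * coeff (cheb_T (Suc n)) (Suc n)"
    by simp
  then show ?case using d c0 3 by simp
qed



lemma linprod_deg: "degree (\<Prod>j<m. [:- r j, 1::real:]) = m \<and> lead_coeff (\<Prod>j<m. [:- r j, 1::real:]) = 1"
proof (induction m)
  case 0 then show ?case by simp
next
  case (Suc m)
  have ne: "(\<Prod>j<m. [:- r j, 1::real:]) \<noteq> 0" using Suc by auto
  have e: "(\<Prod>j<Suc m. [:- r j, 1::real:]) = (\<Prod>j<m. [:- r j, 1::real:]) * [:- r m, 1:]" by simp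
  have l: "degree [:- r m, 1::real:] = 1" "lead_coeff [:- r m, 1::real:] = 1" by simp_all
  have "degree ((\<Prod>j<m. [:- r j, 1::real:]) * [:- r m, 1:]) = Suc m"
    using degree_mult_eq[OF ne, of "[:- r m, 1::real:]"] l Suc by simp
  moreover have "lead_coeff ((\<Prod>j<m. [:- r j, 1::real:]) * [:- r m, 1:]) = 1"
    using lead_coeff_mult[of "\<Prod>j<m. [:- r j, 1::real:]" "[:- r m, 1::real:]"] l Suc by (metis mult_1)
  ultimately show ?case unfolding e by blast
qed

lemma linprod_dvd:
  assumes "inj_on r {..<(m::nat)}" "\<And>j. j < m \<Longrightarrow> poly p (r j) = (0::real)"
  shows "(\<Prod>j<m. [:- r j, 1:]) dvd p"
  using assms
proof (induction m)
  case 0 then show ?case by simp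
next
  case (Suc m)
  have "inj_on r {..<m}" using Suc.prems(1) by (rule inj_on_subset) auto
  then obtain q where q: "p = (\<Prod>j<m. [:- r j, 1:]) * q" using Suc by (auto elim!: dvdE)
  have "poly p (r m) = 0" using Suc.prems by simp
  moreover have "poly (\<Prod>j<m. [:- r j, 1:]) (r m) \<noteq> 0"
  proof -
    have "r m - r j \<noteq> 0" if "j < m" for j
    proof
      assume "r m - r j = 0"
      then have "m = j" using inj_onD[OF Suc.prems(1), of m j] that by simp
      then show False using that by simp
    qed
    then have "\<forall>j<m. r m - r j \<noteq> 0" by blast
    then show ?thesis by (simp add: poly_prod)
  qed
  ultimately have "poly q (r m) = 0" using q by simp
  then have "[:- r m, 1:] dvd q" using poly_eq_0_iff_dvd by blast
  then obtain q' where q': "q = [:- r m, 1:] * q'" by (rule dvdE)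
  have "p = ((\<Prod>j<m. [:- r j, 1:]) * [:- r m, 1:]) * q'" using q q' by (simp only: mult.assoc)
  then show ?case unfolding prod.lessThan_Suc by (rule dvdI)
qed

lemma factor_by_roots:
  fixes p :: "real poly"
  assumes "degree p \<le> (m::nat)" "coeff p m \<noteq> 0" "inj_on r {..<m}" "\<And>j. j < m \<Longrightarrow> poly p (r j) = 0"
  shows "p = smult (coeff p m) (\<Prod>j<m. [:- r j, 1:])"
proof -
  let ?P = "\<Prod>j<m. [:- r j, 1:]"
  obtain q where q: "p = ?P * q" using linprod_dvd[OF assms(3,4)] by (auto elim!: dvdE)
  have Pd: "degree ?P = m" "lead_coeff ?P = 1" using linprod_deg[of r m] by blast+
  have Pne: "?P \<noteq> 0" using Pd by auto
  have qne: "q \<noteq> 0" using q assms(2) by auto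
  have "degree p = m + degree q" using q Pne qne Pd by (simp add: degree_mult_eq)
  then have "degree q = 0" using assms(1) by simp
  then obtain c where c: "q = [:c:]" by (metis degree_eq_zeroE)
  have pc: "p = smult c ?P" using q c by simp
  have "coeff ?P m = 1" using Pd(2) unfolding Pd(1) .
  moreover have "coeff p m = c" using q c Pd by simp
  ultimately show ?thesis using pc by simp
qed



lemma coeff_lin: "coeff ([:- (x::real), 1:] * Q) i = - x * coeff Q i + (if i = 0 then 0 else coeff Q (i - 1))"
  by (simp add: coeff_pCons')

lemma sign_step:
  fixes Q :: "real poly"
  assumes x: "x \<ge> 0" and pos: "\<And>i. i \<le> m \<Longrightarrow> (-1)^(m-i) * coeff Q i > 0"
    and z: "\<And>i. i > m \<Longrightarrow> coeff Q i = 0"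
  shows "\<And>i. 1 \<le> i \<Longrightarrow> i \<le> Suc m \<Longrightarrow> (-1)^(Suc m - i) * coeff ([:-x,1:]*Q) i > 0"
    and "(-1)^(Suc m) * coeff ([:-x,1:]*Q) 0 = x * ((-1)^m * coeff Q 0)"
    and "\<And>i. i > Suc m \<Longrightarrow> coeff ([:-x,1:]*Q) i = 0"
proof -
  fix i assume i: "1 \<le> i" "i \<le> Suc m"
  then obtain i' where i': "i = Suc i'" "i' \<le> m" by (cases i) auto
  have e: "(-1)^(Suc m - i) * coeff ([:-x,1:]*Q) i
      = (-1)^(m - i') * coeff Q i' + x * ((-1::real)^(Suc m - i) * (- coeff Q i))"
    unfolding coeff_lin using i' by (simp add: algebra_simps)
  have a: "(-1)^(m - i') * coeff Q i' > 0" using pos i' by simp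
  have b: "x * ((-1::real)^(Suc m - i) * (- coeff Q i)) \<ge> 0"
  proof (cases "i \<le> m")
    case True
    then have "(-1::real)^(Suc m - i) * (- coeff Q i) = (-1)^(m-i) * coeff Q i"
      by (simp add: Suc_diff_le)
    then show ?thesis using pos[OF True] x by simp
  next
    case False then show ?thesis using z by simp
  qed
  show "(-1)^(Suc m - i) * coeff ([:-x,1:]*Q) i > 0" using e a b by linarith
next
  show "(-1)^(Suc m) * coeff ([:-x,1:]*Q) 0 = x * ((-1)^m * coeff Q 0)"
    unfolding coeff_lin by simp
next
  fix i assume "i > Suc m"
  then show "coeff ([:-x,1:]*Q) i = 0" unfolding coeff_lin using z by simp
qed

lemma sign_prod:
  fixes x :: "nat \<Rightarrow> real"
  assumes "\<And>j. j < m \<Longrightarrow> x j > 0"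
  shows "(\<forall>i\<le>m. (-1)^(m-i) * coeff (\<Prod>j<m. [:- x j, 1:]) i > 0) \<and> (\<forall>i>m. coeff (\<Prod>j<m. [:- x j, 1:]) i = 0)"
  using assms
proof (induction m)
  case 0 then show ?case by (auto simp: coeff_1)
next
  case (Suc m)
  define Q where "Q = (\<Prod>j<m. [:- x j, 1:])"
  have e: "(\<Prod>j<Suc m. [:- x j, 1:]) = [:- x m, 1:] * Q" unfolding Q_def by (simp add: mult.commute)
  have IH: "\<And>i. i \<le> m \<Longrightarrow> (-1)^(m-i) * coeff Q i > 0" "\<And>i. i > m \<Longrightarrow> coeff Q i = 0"
    using Suc unfolding Q_def by auto
  have xm: "x m \<ge> 0" "x m > 0" using Suc.prems[of m] by auto
  note S = sign_step[of "x m" m Q, OF xm(1) IH]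
  have "(-1)^(Suc m - i) * coeff ([:- x m, 1:] * Q) i > 0" if "i \<le> Suc m" for i
  proof (cases "i = 0")
    case True
    have "(-1)^m * coeff Q 0 > 0" using IH(1)[of 0] by simp
    then have "x m * ((-1)^m * coeff Q 0) > 0" using xm by simp
    then show ?thesis using S(2) True by (simp add: mult.left_commute)
  next
    case False then show ?thesis using S(1)[of i] that by simp
  qed
  then show ?case unfolding e using S(3) by auto
qed



theorem lemma6:
  fixes k :: nat and \<rho> \<epsilon> :: real
  assumes "k \<ge> 1" and "0 < \<rho>" and "\<rho> < 1"
    and "0 \<le> \<epsilon>"
    and "\<epsilon> \<le> \<rho> * (1 + cos ((2 * real k - 1) / (2 * real k) * pi))
                      / (1 - cos ((2 * real k - 1) / (2 * real k) * pi))"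
  shows "(\<forall>i\<in>{1..k}. sgn (coeff (p_eps k \<rho> \<epsilon>) i) = (-1) ^ (k - i))
       \<and> (-1) ^ k * coeff (p_eps k \<rho> \<epsilon>) 0 \<ge> 0
       \<and> (\<forall>i\<in>{0..k}.
            let m = ((\<rho> + \<epsilon>) * cos (real i * pi / real k) + \<rho> - \<epsilon>) / 2 in
              m \<in> {-\<epsilon>..\<rho>}
            \<and> poly (p_eps k \<rho> \<epsilon>) m = (-1) ^ i
            \<and> (\<forall>x\<in>{-\<epsilon>..\<rho>}. \<bar>poly (p_eps k \<rho> \<epsilon>) x\<bar> \<le> \<bar>poly (p_eps k \<rho> \<epsilon>) m\<bar>))"
proof -
  define a where "a = 2 / (\<rho> + \<epsilon>)"
  define b where "b = - ((\<rho> - \<epsilon>) / (\<rho> + \<epsilon>))"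
  have spos: "\<rho> + \<epsilon> > 0" using assms by simp
  have apos: "a > 0" unfolding a_def using spos by simp
  have pdef: "p_eps k \<rho> \<epsilon> = pcompose (cheb_T k) [:b, a:]" unfolding p_eps_def a_def b_def by simp
  have lin: "b + a * z = (2 * z - \<rho> + \<epsilon>) / (\<rho> + \<epsilon>)" for z
  proof -
    have ne: "\<rho> + \<epsilon> \<noteq> 0" using spos by simp
    have bb: "b = (- (\<rho> - \<epsilon>)) / (\<rho> + \<epsilon>)" unfolding b_def by (rule minus_divide_left)
    have "b + a * z = (- (\<rho> - \<epsilon>) + 2 * z) / (\<rho> + \<epsilon>)"
      unfolding a_def bb by (simp only: add_divide_distrib) simp
    then show ?thesis by (simp add: algebra_simps)
  qed
  have peval: "poly (p_eps k \<rho> \<epsilon>) z = poly (cheb_T k) (b + a * z)" for z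
    unfolding pdef by (simp add: poly_pcompose mult.commute)
  have kpos: "real k > 0" using assms by simp
  have partii: "\<forall>i\<in>{0..k}.
            let m = ((\<rho> + \<epsilon>) * cos (real i * pi / real k) + \<rho> - \<epsilon>) / 2 in
              m \<in> {-\<epsilon>..\<rho>}
            \<and> poly (p_eps k \<rho> \<epsilon>) m = (-1) ^ i
            \<and> (\<forall>x\<in>{-\<epsilon>..\<rho>}. \<bar>poly (p_eps k \<rho> \<epsilon>) x\<bar> \<le> \<bar>poly (p_eps k \<rho> \<epsilon>) m\<bar>)"
  proof (intro ballI, unfold Let_def)
    fix i assume i: "i \<in> {0..k}"
    define c where "c = cos (real i * pi / real k)"
    define m where "m = ((\<rho> + \<epsilon>) * c + \<rho> - \<epsilon>) / 2"
    have c1: "-1 \<le> c" "c \<le> 1" unfolding c_def by auto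
    have "(\<rho> + \<epsilon>) * (-1) \<le> (\<rho> + \<epsilon>) * c" "(\<rho> + \<epsilon>) * c \<le> (\<rho> + \<epsilon>) * 1"
      using c1 spos by (intro mult_left_mono; simp)+
    then have mI: "m \<in> {-\<epsilon>..\<rho>}" unfolding m_def by auto
    have "b + a * m = c" unfolding lin m_def using spos by (simp add: field_simps)
    then have "poly (p_eps k \<rho> \<epsilon>) m = poly (cheb_T k) (cos (real i * pi / real k))"
      unfolding peval c_def by simp
    also have "\<dots> = cos (real k * (real i * pi / real k))" by (rule cheb_cos)
    also have "real k * (real i * pi / real k) = real i * pi" using kpos by simp
    finally have pm: "poly (p_eps k \<rho> \<epsilon>) m = (-1) ^ i" by simp
    have bound: "\<bar>poly (p_eps k \<rho> \<epsilon>) x\<bar> \<le> 1" if x: "x \<in> {-\<epsilon>..\<rho>}" for x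
    proof -
      define z where "z = b + a * x"
      have "2 * x - \<rho> + \<epsilon> \<le> \<rho> + \<epsilon>" "- (\<rho> + \<epsilon>) \<le> 2 * x - \<rho> + \<epsilon>" using x by auto
      then have z1: "-1 \<le> z" "z \<le> 1" unfolding z_def lin using spos by (simp_all add: field_simps)
      have "poly (p_eps k \<rho> \<epsilon>) x = cos (real k * arccos z)"
        unfolding peval z_def[symmetric] using cheb_cos[of k "arccos z"] z1 by simp
      then show ?thesis by simp
    qed
    show "m \<in> {-\<epsilon>..\<rho>} \<and> poly (p_eps k \<rho> \<epsilon>) m = (-1) ^ i
            \<and> (\<forall>x\<in>{-\<epsilon>..\<rho>}. \<bar>poly (p_eps k \<rho> \<epsilon>) x\<bar> \<le> \<bar>poly (p_eps k \<rho> \<epsilon>) m\<bar>)"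
      using mI pm bound by simp
  qed
  define y where "y j = cos ((2 * real j + 1) * pi / (2 * real k))" for j :: nat
  define x where "x j = ((\<rho> + \<epsilon>) * y j + \<rho> - \<epsilon>) / 2" for j :: nat
  obtain n where n: "k = Suc n" using assms(1) by (cases k) auto
  have ang: "0 < (2 * real j + 1) * pi / (2 * real k)" "(2 * real j + 1) * pi / (2 * real k) < pi"
    if "j < k" for j
  proof -
    show "0 < (2 * real j + 1) * pi / (2 * real k)" using kpos by simp
    have "2 * real j + 1 < 2 * real k" using that by linarith
    then have "(2 * real j + 1) * pi < (2 * real k) * pi" by simp
    then show "(2 * real j + 1) * pi / (2 * real k) < pi" using kpos by (simp add: divide_less_eq)
  qed
  have roots: "poly (cheb_T k) (y j) = 0" if "j < k" for j
  proof -
    have "real k * ((2 * real j + 1) * pi / (2 * real k)) = real (2 * j + 1) * (pi / 2)"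
      using kpos by (simp add: field_simps)
    moreover have "cos (real (2 * j + 1) * (pi / 2)) = 0" unfolding cos_zero_iff
      by (rule disjI1, rule exI[of _ "2 * j + 1"]) simp
    ultimately show ?thesis unfolding y_def cheb_cos by metis
  qed
  have yinj: "inj_on y {..<k}"
  proof (rule inj_onI)
    fix j1 j2 assume j: "j1 \<in> {..<k}" "j2 \<in> {..<k}" "y j1 = y j2"
    have "(2 * real j1 + 1) * pi / (2 * real k) = (2 * real j2 + 1) * pi / (2 * real k)"
      using cos_inj_pi[OF less_imp_le[OF ang(1)] less_imp_le[OF ang(2)] less_imp_le[OF ang(1)] less_imp_le[OF ang(2)]] j
      unfolding y_def by auto
    then show "j1 = j2" using kpos by (simp add: field_simps)
  qed
  have cd: "degree (cheb_T k) \<le> k" "coeff (cheb_T k) k = 2 ^ (k - 1)"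
    using cheb_deg_coeff[of k] assms(1) by auto
  have Tfac: "cheb_T k = smult (2 ^ (k - 1)) (\<Prod>j<k. [:- y j, 1:])"
    using factor_by_roots[of "cheb_T k" k y] cd yinj roots by simp
  have lf: "pcompose [:- y j, 1:] [:b, a:] = smult a [:- x j, 1:]" for j
    unfolding x_def using spos by (simp add: pcompose_pCons a_def b_def field_simps)
  have pfac: "p_eps k \<rho> \<epsilon> = smult (2 ^ (k - 1) * a ^ k) (\<Prod>j<k. [:- x j, 1:])"
    unfolding pdef Tfac pcompose_smult pcompose_prod lf prod_smult by simp
  have ymono: "y j > y n" if "j < n" for j
    unfolding y_def using that n
    by (intro cos_monotone_0_pi less_imp_le[OF ang(1)] less_imp_le[OF ang(2)]) (auto simp: divide_strict_right_mono)
  have yn: "y n = cos ((2 * real k - 1) / (2 * real k) * pi)"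
    unfolding y_def using n by (simp add: field_simps)
  have yn1: "y n < 1"
  proof -
    have "cos ((2 * real n + 1) * pi / (2 * real k)) < cos 0"
      using ang[of n] n by (intro cos_monotone_0_pi) auto
    then show ?thesis unfolding y_def by simp
  qed
  have xn: "x n \<ge> 0"
  proof -
    have "\<epsilon> \<le> \<rho> * (1 + y n) / (1 - y n)" using assms(5) yn by simp
    then have "\<epsilon> * (1 - y n) \<le> \<rho> * (1 + y n)" using yn1 by (simp add: le_divide_eq)
    then show ?thesis unfolding x_def by (simp add: algebra_simps)
  qed
  have xpos: "x j > 0" if "j < n" for j
  proof -
    have "(\<rho> + \<epsilon>) * y n < (\<rho> + \<epsilon>) * y j" using ymono[OF that] spos by simp
    then have "x n < x j" unfolding x_def by simp
    then show ?thesis using xn by simp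
  qed
  define Q where "Q = (\<Prod>j<n. [:- x j, 1:])"
  define C where "C = (2::real) ^ (k - 1) * a ^ k"
  have Cpos: "C > 0" unfolding C_def using apos by simp
  have pQ: "p_eps k \<rho> \<epsilon> = smult C ([:- x n, 1:] * Q)"
  proof -
    have "(\<Prod>j<k. [:- x j, 1:]) = [:- x n, 1:] * Q" unfolding n Q_def
      by (simp only: prod.lessThan_Suc mult.commute)
    then show ?thesis unfolding pfac C_def by simp
  qed
  have SQ: "\<And>i. i \<le> n \<Longrightarrow> (-1)^(n-i) * coeff Q i > 0" "\<And>i. i > n \<Longrightarrow> coeff Q i = 0"
    using sign_prod[of n x] xpos unfolding Q_def by auto
  note S = sign_step[of "x n" n Q, OF xn SQ]
  have part1: "\<forall>i\<in>{1..k}. sgn (coeff (p_eps k \<rho> \<epsilon>) i) = (-1) ^ (k - i)"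
  proof
    fix i assume i: "i \<in> {1..k}"
    have "(-1)^(k - i) * coeff (p_eps k \<rho> \<epsilon>) i = C * ((-1)^(Suc n - i) * coeff ([:- x n, 1:] * Q) i)"
    proof -
      have "coeff (p_eps k \<rho> \<epsilon>) i = C * coeff ([:- x n, 1:] * Q) i" unfolding pQ by (rule coeff_smult)
      then show ?thesis using n by (simp only: mult.left_commute)
    qed
    moreover have "(-1)^(Suc n - i) * coeff ([:- x n, 1:] * Q) i > 0" using S(1)[of i] i n by simp
    ultimately have pos: "(-1)^(k - i) * coeff (p_eps k \<rho> \<epsilon>) i > 0" using Cpos by simp
    show "sgn (coeff (p_eps k \<rho> \<epsilon>) i) = (-1) ^ (k - i)"
    proof (cases "even (k - i)")
      case True then show ?thesis using pos by simp
    next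
      case False then show ?thesis using pos by (simp add: zero_less_mult_iff)
    qed
  qed
  have part0: "(-1) ^ k * coeff (p_eps k \<rho> \<epsilon>) 0 \<ge> 0"
  proof -
    have "(-1) ^ k * coeff (p_eps k \<rho> \<epsilon>) 0 = C * (x n * ((-1)^n * coeff Q 0))"
    proof -
      have "coeff (p_eps k \<rho> \<epsilon>) 0 = C * coeff ([:- x n, 1:] * Q) 0" unfolding pQ by (rule coeff_smult)
      then show ?thesis using n S(2) by (simp only: mult.left_commute)
    qed
    moreover have "(-1)^n * coeff Q 0 > 0" using SQ(1)[of 0] by simp
    ultimately show ?thesis using Cpos xn by simp
  qed
  show ?thesis using part1 part0 partii by blast
qed

end
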